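(* Let $g\ge0$, $n\ge1$, $G\in\mathbb{G}_{g,n}$, and let $T_1,T_2$ be tails of $G$. If $T_1\cap T_2\ne\emptyset$, then either one of $T_1,T_2$ contains the other, or $T_1\cup T_2=G$.
   Context: $\mathbb{G}_{g,n}$ is the set of isomorphism classes of dual graphs of stable $n$-pointed curves of genus $g$: connected graphs with vertex genera and $n$ labelled legs, of total genus $g$, each vertex stable. A tail of $G$ is a connected vertex-induced subgraph $T$ (i.e. determined by a vertex set, containing all edges of $G$ with both ends in it and the legs rooted in it) that is joined to its complement by exactly one edge of $G$. *)

theory Defs
  imports Main
begin

text \<open>A graph with legs is given by a vertex set V, an edge set E, an endpoint map
  ends (ends e has one element for a loop, two for an ordinary edge), a genus
  function gen on vertices and a leg map leg assigning to each label i in {1..n}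
  the vertex it is rooted in.\<close>

definition adj_in :: "'e set \<Rightarrow> ('e \<Rightarrow> 'v set) \<Rightarrow> 'v set \<Rightarrow> ('v \<times> 'v) set" where
  "adj_in E ends S = {(x, y). x \<in> S \<and> y \<in> S \<and> (\<exists>e\<in>E. ends e = {x, y})}"

definition connected_on :: "'e set \<Rightarrow> ('e \<Rightarrow> 'v set) \<Rightarrow> 'v set \<Rightarrow> bool" where
  "connected_on E ends S \<longleftrightarrow> S \<noteq> {} \<and> (\<forall>x\<in>S. \<forall>y\<in>S. (x, y) \<in> (adj_in E ends S)\<^sup>*)"

definition valence :: "nat \<Rightarrow> 'e set \<Rightarrow> ('e \<Rightarrow> 'v set) \<Rightarrow> (nat \<Rightarrow> 'v) \<Rightarrow> 'v \<Rightarrow> nat" where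
  "valence n E ends leg v =
     2 * card {e\<in>E. ends e = {v}} + card {e\<in>E. v \<in> ends e \<and> card (ends e) = 2}
     + card {i\<in>{1..n}. leg i = v}"

definition stable_graph ::
  "nat \<Rightarrow> nat \<Rightarrow> 'v set \<Rightarrow> 'e set \<Rightarrow> ('e \<Rightarrow> 'v set) \<Rightarrow> ('v \<Rightarrow> nat) \<Rightarrow> (nat \<Rightarrow> 'v) \<Rightarrow> bool" where
  "stable_graph g n V E ends gen leg \<longleftrightarrow>
     finite V \<and> finite E \<and>
     (\<forall>e\<in>E. ends e \<subseteq> V \<and> 1 \<le> card (ends e) \<and> card (ends e) \<le> 2) \<and>
     (\<forall>i\<in>{1..n}. leg i \<in> V) \<and>
     connected_on E ends V \<and>
     int g = (\<Sum>v\<in>V. int (gen v)) + int (card E) - int (card V) + 1 \<and>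
     (\<forall>v\<in>V. 2 * int (gen v) - 2 + int (valence n E ends leg v) > 0)"

definition edges_in :: "'e set \<Rightarrow> ('e \<Rightarrow> 'v set) \<Rightarrow> 'v set \<Rightarrow> 'e set" where
  "edges_in E ends S = {e\<in>E. ends e \<subseteq> S}"

definition cut_edges :: "'v set \<Rightarrow> 'e set \<Rightarrow> ('e \<Rightarrow> 'v set) \<Rightarrow> 'v set \<Rightarrow> 'e set" where
  "cut_edges V E ends S = {e\<in>E. ends e \<inter> S \<noteq> {} \<and> ends e \<inter> (V - S) \<noteq> {}}"

text \<open>A tail, represented by its vertex set.\<close>
definition is_tail :: "'v set \<Rightarrow> 'e set \<Rightarrow> ('e \<Rightarrow> 'v set) \<Rightarrow> 'v set \<Rightarrow> bool" where
  "is_tail V E ends S \<longleftrightarrow> S \<subseteq> V \<and> connected_on E ends S \<and> card (cut_edges V E ends S) = 1"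

end

theory Submission
  imports Defs
begin

lemma conn_cut:
  assumes "connected_on E ends V" "X \<subseteq> V" "X \<noteq> {}" "X \<noteq> V"
  shows "cut_edges V E ends X \<noteq> {}"
proof
  assume C: "cut_edges V E ends X = {}"
  obtain x where x: "x \<in> X" using assms by blast
  obtain y where y: "y \<in> V" "y \<notin> X" using assms by blast
  have xy: "(x, y) \<in> (adj_in E ends V)\<^sup>*" using assms(1) x y assms(2)
    unfolding connected_on_def by blast
  have "y \<in> X" using xy
  proof (induction rule: rtrancl_induct)
    case base then show ?case using x .
  next
    case (step z w)
    then obtain e where e: "e \<in> E" "ends e = {z, w}" "w \<in> V"
      unfolding adj_in_def by blast
    show ?case
    proof (rule ccontr)
      assume "w \<notin> X"
      then have "e \<in> cut_edges V E ends X" using e step.IH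
        unfolding cut_edges_def by blast
      then show False using C by blast
    qed
  qed
  then show False using y by blast
qed

lemma ends2:
  assumes "1 \<le> card (S::'a set)" "card S \<le> 2"
  obtains a b where "S = {a, b}"
proof -
  have "card S = 1 \<or> card S = 2" using assms by linarith
  then show ?thesis
  proof
    assume "card S = 1" then obtain a where "S = {a}" by (rule card_1_singletonE)
    then show ?thesis using that[of a a] by simp
  next
    assume "card S = 2" then obtain a b where "S = {a, b}" by (auto simp: card_2_iff)
    then show ?thesis using that by blast
  qed
qed

theorem lemma4p13:
  fixes g n :: nat and V :: "'v set" and E :: "'e set" and ends :: "'e \<Rightarrow> 'v set"
    and gen :: "'v \<Rightarrow> nat" and leg :: "nat \<Rightarrow> 'v" and T1 T2 :: "'v set"
  assumes "n \<ge> 1"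
    and "stable_graph g n V E ends gen leg"
    and "is_tail V E ends T1" and "is_tail V E ends T2"
    and "T1 \<inter> T2 \<noteq> {}"
  shows "T1 \<subseteq> T2 \<or> T2 \<subseteq> T1 \<or>
         (T1 \<union> T2 = V \<and> edges_in E ends T1 \<union> edges_in E ends T2 = E)"
proof (rule ccontr)
  assume neg: "\<not> ?thesis"
  have conn: "connected_on E ends V" and EV: "\<forall>e\<in>E. ends e \<subseteq> V \<and> 1 \<le> card (ends e) \<and> card (ends e) \<le> 2"
    using assms(2) unfolding stable_graph_def by auto
  have A: "T1 \<subseteq> V" "card (cut_edges V E ends T1) = 1" using assms(3) unfolding is_tail_def by auto
  have B: "T2 \<subseteq> V" "card (cut_edges V E ends T2) = 1" using assms(4) unfolding is_tail_def by auto
  obtain c1 where c1: "cut_edges V E ends T1 = {c1}" using A(2) by (rule card_1_singletonE)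
  obtain c2 where c2: "cut_edges V E ends T2 = {c2}" using B(2) by (rule card_1_singletonE)
  obtain q where q: "q \<in> T1" "q \<notin> T2" using neg by blast
  obtain s where s: "s \<in> T2" "s \<notin> T1" using neg by blast
  obtain p where p: "p \<in> T1" "p \<in> T2" using assms(5) by blast
  have cutI: "\<And>X. X \<subseteq> V \<Longrightarrow> X \<noteq> {} \<Longrightarrow> X \<noteq> V \<Longrightarrow>
     \<exists>e\<in>E. ends e \<inter> X \<noteq> {} \<and> ends e \<inter> (V - X) \<noteq> {}"
    using conn_cut[OF conn] unfolding cut_edges_def by blast
  have inA: "\<And>e. e \<in> E \<Longrightarrow> ends e \<inter> T1 \<noteq> {} \<Longrightarrow> ends e \<inter> (V - T1) \<noteq> {} \<Longrightarrow> e = c1"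
    using c1 unfolding cut_edges_def by blast
  have inB: "\<And>e. e \<in> E \<Longrightarrow> ends e \<inter> T2 \<noteq> {} \<Longrightarrow> ends e \<inter> (V - T2) \<noteq> {} \<Longrightarrow> e = c2"
    using c2 unfolding cut_edges_def by blast
  have c1E: "c1 \<in> E" "ends c1 \<inter> T1 \<noteq> {}" "ends c1 \<inter> (V - T1) \<noteq> {}"
    using c1 unfolding cut_edges_def by auto
  have c2E: "c2 \<in> E" "ends c2 \<inter> T2 \<noteq> {}" "ends c2 \<inter> (V - T2) \<noteq> {}"
    using c2 unfolding cut_edges_def by auto
  show False
  proof (cases "T1 \<union> T2 = V")
    case False
    then obtain r where r: "r \<in> V" "r \<notin> T1" "r \<notin> T2" using A B by blast
    have regions: "\<exists>e\<in>E. ends e \<inter> X \<noteq> {} \<and> ends e \<inter> (V - X) \<noteq> {}"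
      if "X \<in> {T1 \<inter> T2, T1 - T2, T2 - T1, V - (T1 \<union> T2)}" for X
      using that p q r s A B by (intro cutI) auto
    have reg2: "\<exists>e\<in>{c1, c2}. ends e \<inter> X \<noteq> {}"
      if XR: "X \<in> {T1 \<inter> T2, T1 - T2, T2 - T1, V - (T1 \<union> T2)}" for X
    proof -
      obtain e where e: "e \<in> E" "ends e \<inter> X \<noteq> {}" "ends e \<inter> (V - X) \<noteq> {}"
        using regions[OF XR] by blast
      have "ends e \<subseteq> V" using EV e by blast
      then have "e = c1 \<or> e = c2" using XR e inA[OF e(1)] inB[OF e(1)] by blast
      then show ?thesis using e by blast
    qed
    obtain a1 b1 where ab1: "ends c1 = {a1, b1}" using EV c1E(1) ends2 by metis
    obtain a2 b2 where ab2: "ends c2 = {a2, b2}" using EV c2E(1) ends2 by metis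
    have V1: "a1 \<in> V" "b1 \<in> V" using EV c1E ab1 by auto
    have V2: "a2 \<in> V" "b2 \<in> V" using EV c2E ab2 by auto
    show False
    proof (cases "c1 = c2")
      case True
      then have R: "ends c1 \<inter> X \<noteq> {}"
        if "X \<in> {T1 \<inter> T2, T1 - T2, T2 - T1, V - (T1 \<union> T2)}" for X
        using reg2[OF that] by auto
      have "a1 \<in> T1 \<inter> T2 \<or> b1 \<in> T1 \<inter> T2" using R[of "T1 \<inter> T2"] ab1 by auto
      moreover have "a1 \<in> T1 - T2 \<or> b1 \<in> T1 - T2" using R[of "T1 - T2"] ab1 by auto
      moreover have "a1 \<in> T2 - T1 \<or> b1 \<in> T2 - T1" using R[of "T2 - T1"] ab1 by auto
      ultimately show False by blast
    next
      case False
      have n2: "\<not> (ends c2 \<inter> T1 \<noteq> {} \<and> ends c2 \<inter> (V - T1) \<noteq> {})"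
        using inA[OF c2E(1)] False by auto
      have n1: "\<not> (ends c1 \<inter> T2 \<noteq> {} \<and> ends c1 \<inter> (V - T2) \<noteq> {})"
        using inB[OF c1E(1)] False by auto
      have R: "\<exists>x\<in>{a1,b1,a2,b2}. x \<in> X"
        if "X \<in> {T1 \<inter> T2, T1 - T2, T2 - T1, V - (T1 \<union> T2)}" for X
        using reg2[OF that] ab1 ab2 by auto
      have h1: "(a1 \<in> T2) = (b1 \<in> T2)" using n1 ab1 V1 by auto
      have h2: "(a2 \<in> T1) = (b2 \<in> T1)" using n2 ab2 V2 by auto
      have h3: "(a1 \<in> T1) = (b1 \<notin> T1)" using c1E ab1 V1 by auto
      have h4: "(a2 \<in> T2) = (b2 \<notin> T2)" using c2E ab2 V2 by auto
      have r1: "a1 \<in> T1 \<inter> T2 \<or> b1 \<in> T1 \<inter> T2 \<or> a2 \<in> T1 \<inter> T2 \<or> b2 \<in> T1 \<inter> T2"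
        using R[of "T1 \<inter> T2"] by auto
      have r2: "a1 \<in> T1 - T2 \<or> b1 \<in> T1 - T2 \<or> a2 \<in> T1 - T2 \<or> b2 \<in> T1 - T2"
        using R[of "T1 - T2"] by auto
      have r3: "a1 \<in> T2 - T1 \<or> b1 \<in> T2 - T1 \<or> a2 \<in> T2 - T1 \<or> b2 \<in> T2 - T1"
        using R[of "T2 - T1"] by auto
      have r4: "a1 \<in> V - (T1 \<union> T2) \<or> b1 \<in> V - (T1 \<union> T2) \<or> a2 \<in> V - (T1 \<union> T2) \<or> b2 \<in> V - (T1 \<union> T2)"
        using R[of "V - (T1 \<union> T2)"] by auto
      show False using h1 h2 h3 h4 r1 r2 r3 r4 by auto
    qed
  next
    case True
    then obtain e where e: "e \<in> E" "\<not> ends e \<subseteq> T1" "\<not> ends e \<subseteq> T2"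
      using neg unfolding edges_in_def by auto
    have eV: "ends e \<subseteq> V" "card (ends e) \<le> 2" using EV e by auto
    obtain a b where ab: "ends e = {a, b}" using EV e(1) ends2 by metis
    have ec1: "e = c1" using inA[OF e(1)] e eV True by blast
    have ec2: "e = c2" using inB[OF e(1)] e eV True by blast
    have noP: "ends e \<inter> (T1 \<inter> T2) = {}" using ab e eV True by auto
    obtain f where f: "f \<in> E" "ends f \<inter> (T1 \<inter> T2) \<noteq> {}" "ends f \<inter> (V - (T1 \<inter> T2)) \<noteq> {}"
      using cutI[of "T1 \<inter> T2"] A B p q by blast
    have "f = c1 \<or> f = c2" using inA[OF f(1)] inB[OF f(1)] f True by blast
    then show False using ec1 ec2 noP f by auto
  qed
qed

end
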